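(* Let $\mathfrak g$ be a finite-dimensional complex simple Lie algebra, $\lambda\in P^+$, and $\boldsymbol\lambda=(\lambda_1,\lambda_2)$, $\boldsymbol\mu=(\mu_1,\mu_2)\in P^+(\lambda,2)$. Then the following are equivalent: (a) $\boldsymbol\lambda\preceq\boldsymbol\mu$; (b) $(\lambda_1-\mu_1)(h_\alpha)\,(\mu_1-\lambda_2)(h_\alpha)\ge0$ for all $\alpha\in R^+$; (c) $(\lambda_1-\mu_1)(h_\alpha)\,(\mu_1-\lambda_2)(h_\alpha)\ge0$ for all $\alpha\in R$. Moreover, if $w\in W$ is such that $w(\lambda_1-\lambda_2)\in P^+$, then $\boldsymbol\lambda\preceq\boldsymbol\mu$ if and only if both $w(\lambda_1-\mu_1)\in P^+$ and $w(\mu_1-\lambda_2)\in P^+$.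
   Context: $\mathfrak g$ has Cartan subalgebra $\mathfrak h$, roots $R$, positive roots $R^+$, coroots $h_\alpha$ for $\alpha\in R^+$ with $h_{-\alpha}=-h_\alpha$, Weyl group $W$ (acting on weights), $P^+$ the dominant integral weights. $P^+(\lambda,2)=\{(\lambda_1,\lambda_2)\in(P^+)^2:\lambda_1+\lambda_2=\lambda\}$, and $(\lambda_1,\lambda_2)\preceq(\mu_1,\mu_2)$ means $\min\{\lambda_1(h_\alpha),\lambda_2(h_\alpha)\}\le\min\{\mu_1(h_\alpha),\mu_2(h_\alpha)\}$ for all $\alpha\in R^+$. *)

theory Defs
  imports "HOL-Analysis.Analysis"
begin

text \<open>The root datum of a finite-dimensional complex simple Lie algebra is modelled by
  an irreducible reduced crystallographic root system R in a Euclidean space E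
  (the real span of the roots in the dual of the Cartan subalgebra).
  For a weight lam and a root alpha, lam(h_alpha) = 2 (lam, alpha) / (alpha, alpha).\<close>

definition coroot_eval :: "'a::real_inner \<Rightarrow> 'a \<Rightarrow> real" where
  "coroot_eval lam \<alpha> = 2 * (lam \<bullet> \<alpha>) / (\<alpha> \<bullet> \<alpha>)"

definition reflection :: "'a::real_inner \<Rightarrow> 'a \<Rightarrow> 'a" where
  "reflection \<alpha> v = v - coroot_eval v \<alpha> *\<^sub>R \<alpha>"

definition root_system :: "'a::euclidean_space set \<Rightarrow> bool" where
  "root_system R \<longleftrightarrow>
     finite R \<and> 0 \<notin> R \<and> span R = UNIV \<and>
     (\<forall>\<alpha>\<in>R. \<forall>\<beta>\<in>R. reflection \<alpha> \<beta> \<in> R) \<and>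
     (\<forall>\<alpha>\<in>R. \<forall>\<beta>\<in>R. coroot_eval \<beta> \<alpha> \<in> \<int>) \<and>
     (\<forall>\<alpha>\<in>R. \<forall>c::real. c *\<^sub>R \<alpha> \<in> R \<longrightarrow> c = 1 \<or> c = -1)"

definition irreducible_rs :: "'a::euclidean_space set \<Rightarrow> bool" where
  "irreducible_rs R \<longleftrightarrow>
     \<not> (\<exists>R1 R2. R1 \<noteq> {} \<and> R2 \<noteq> {} \<and> R1 \<union> R2 = R \<and> R1 \<inter> R2 = {} \<and>
              (\<forall>\<alpha>\<in>R1. \<forall>\<beta>\<in>R2. \<alpha> \<bullet> \<beta> = 0))"

definition positive_system :: "'a::euclidean_space set \<Rightarrow> 'a set \<Rightarrow> bool" where
  "positive_system R Rp \<longleftrightarrow>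
     (\<exists>v. (\<forall>\<alpha>\<in>R. v \<bullet> \<alpha> \<noteq> 0) \<and> Rp = {\<alpha>\<in>R. v \<bullet> \<alpha> > 0})"

inductive_set weyl_group :: "'a::euclidean_space set \<Rightarrow> ('a \<Rightarrow> 'a) set" for R where
  weyl_id: "id \<in> weyl_group R"
| weyl_refl: "\<alpha> \<in> R \<Longrightarrow> w \<in> weyl_group R \<Longrightarrow> reflection \<alpha> \<circ> w \<in> weyl_group R"

definition integral_weights :: "'a::euclidean_space set \<Rightarrow> 'a set" where
  "integral_weights R = {lam. \<forall>\<alpha>\<in>R. coroot_eval lam \<alpha> \<in> \<int>}"

definition dominant_weights :: "'a::euclidean_space set \<Rightarrow> 'a set \<Rightarrow> 'a set" where
  "dominant_weights R Rp = {lam \<in> integral_weights R. \<forall>\<alpha>\<in>Rp. coroot_eval lam \<alpha> \<ge> 0}"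

definition dominant_pairs :: "'a::euclidean_space set \<Rightarrow> 'a set \<Rightarrow> 'a \<Rightarrow> ('a \<times> 'a) set" where
  "dominant_pairs R Rp lam =
     {(l1, l2). l1 \<in> dominant_weights R Rp \<and> l2 \<in> dominant_weights R Rp \<and> l1 + l2 = lam}"

definition pair_preceq :: "'a::euclidean_space set \<Rightarrow> 'a \<times> 'a \<Rightarrow> 'a \<times> 'a \<Rightarrow> bool" where
  "pair_preceq Rp l m \<longleftrightarrow>
     (\<forall>\<alpha>\<in>Rp. min (coroot_eval (fst l) \<alpha>) (coroot_eval (snd l) \<alpha>)
              \<le> min (coroot_eval (fst m) \<alpha>) (coroot_eval (snd m) \<alpha>))"

end

theory Submission
  imports Defs
begin

lemma ce_diff: "coroot_eval (x - y) a = coroot_eval x a - coroot_eval y a"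
  unfolding coroot_eval_def by (simp add: inner_diff_left diff_divide_distrib algebra_simps)

lemma ce_add: "coroot_eval (x + y) a = coroot_eval x a + coroot_eval y a"
  unfolding coroot_eval_def by (simp add: inner_add_left add_divide_distrib algebra_simps)

lemma ce_neg: "coroot_eval v (- a) = - coroot_eval v a"
  unfolding coroot_eval_def by simp

lemma per_root:
  fixes a b c d :: real
  assumes "a + b = c + d"
  shows "min a b \<le> min c d \<longleftrightarrow> 0 \<le> (a - c) * (c - b)"
  using assms by (auto simp: zero_le_mult_iff min_def)

lemma refl_inner:
  assumes "a \<bullet> a \<noteq> 0"
  shows "reflection a v \<bullet> reflection a u = v \<bullet> u"
  using assms unfolding reflection_def coroot_eval_def
  by (simp add: inner_diff_left inner_diff_right field_simps inner_commute)

lemma weyl_props: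
  assumes "root_system R" and "w \<in> weyl_group R"
  shows "(\<forall>x y. w x \<bullet> w y = x \<bullet> y) \<and> (\<forall>b\<in>R. w b \<in> R)"
  using assms(2)
proof induction
  case weyl_id then show ?case by simp
next
  case (weyl_refl a w)
  have "a \<noteq> 0" using assms(1) weyl_refl(1) unfolding root_system_def by auto
  then have "a \<bullet> a \<noteq> 0" by simp
  then show ?case using weyl_refl assms(1) refl_inner[OF \<open>a \<bullet> a \<noteq> 0\<close>] unfolding root_system_def by auto
qed

lemma weyl_surj:
  assumes "root_system R" and "w \<in> weyl_group R"
  shows "w ` R = R"
proof -
  from weyl_props[OF assms] have ip: "\<And>x y. w x \<bullet> w y = x \<bullet> y" and sub: "w ` R \<subseteq> R" by auto
  have "inj w"
  proof (rule injI)
    fix x y assume "w x = w y"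
    then have "(w x - w y) \<bullet> (w x - w y) = 0" by simp
    then have "(x - y) \<bullet> (x - y) = 0"
      by (simp add: inner_diff_left inner_diff_right ip)
    then show "x = y" by simp
  qed
  have fin: "finite R" using assms(1) unfolding root_system_def by auto
  have "card (w ` R) = card R" using \<open>inj w\<close> by (simp add: card_image inj_on_subset)
  then show ?thesis using sub fin by (simp add: card_subset_eq)
qed

lemma ce_weyl:
  assumes "root_system R" and "w \<in> weyl_group R"
  shows "coroot_eval (w x) (w g) = coroot_eval x g"
  using weyl_props[OF assms] unfolding coroot_eval_def by simp

theorem proposition5p1:
  fixes R Rp :: "'a::euclidean_space set" and lam l1 l2 m1 m2 :: 'a
  assumes "root_system R" and "irreducible_rs R" and "positive_system R Rp"
    and "lam \<in> dominant_weights R Rp"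
    and "(l1, l2) \<in> dominant_pairs R Rp lam" and "(m1, m2) \<in> dominant_pairs R Rp lam"
  shows "(pair_preceq Rp (l1, l2) (m1, m2) \<longleftrightarrow>
            (\<forall>\<alpha>\<in>Rp. coroot_eval (l1 - m1) \<alpha> * coroot_eval (m1 - l2) \<alpha> \<ge> 0))
       \<and> (pair_preceq Rp (l1, l2) (m1, m2) \<longleftrightarrow>
            (\<forall>\<alpha>\<in>R. coroot_eval (l1 - m1) \<alpha> * coroot_eval (m1 - l2) \<alpha> \<ge> 0))
       \<and> (\<forall>w\<in>weyl_group R. w (l1 - l2) \<in> dominant_weights R Rp \<longrightarrow>
            (pair_preceq Rp (l1, l2) (m1, m2) \<longleftrightarrow>
               w (l1 - m1) \<in> dominant_weights R Rp \<and> w (m1 - l2) \<in> dominant_weights R Rp))"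
proof -
  have rs: "root_system R" by fact
  have sum: "l1 + l2 = m1 + m2" using assms(5,6) unfolding dominant_pairs_def by auto
  have m2: "m2 = l1 + l2 - m1" using sum by (simp add: algebra_simps)
  have intl: "\<And>g. g \<in> R \<Longrightarrow> coroot_eval l1 g \<in> \<int> \<and> coroot_eval l2 g \<in> \<int> \<and> coroot_eval m1 g \<in> \<int>"
    using assms(5,6) unfolding dominant_pairs_def dominant_weights_def integral_weights_def by auto
  obtain v where v: "\<forall>a\<in>R. v \<bullet> a \<noteq> 0" and Rp: "Rp = {a\<in>R. v \<bullet> a > 0}"
    using assms(3) unfolding positive_system_def by auto
  have negR: "\<And>a. a \<in> R \<Longrightarrow> - a \<in> R"
  proof -
    fix a assume a: "a \<in> R"
    then have "a \<noteq> 0" using rs unfolding root_system_def by auto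
    then have "reflection a a = - a" unfolding reflection_def coroot_eval_def by (simp add: algebra_simps scaleR_2)
    moreover have "reflection a a \<in> R" using rs a unfolding root_system_def by auto
    ultimately show "- a \<in> R" by simp
  qed
  have split: "\<And>a. a \<in> R \<Longrightarrow> a \<in> Rp \<or> - a \<in> Rp"
  proof -
    fix a assume a: "a \<in> R"
    have "v \<bullet> a \<noteq> 0" using v a by auto
    then show "a \<in> Rp \<or> - a \<in> Rp" using a negR[OF a] Rp by auto
  qed
  have RpR: "Rp \<subseteq> R" using Rp by auto
  define P where "P = (\<lambda>a. coroot_eval (l1 - m1) a * coroot_eval (m1 - l2) a \<ge> 0)"
  have Pneg: "\<And>a. P (- a) = P a" unfolding P_def by (simp add: ce_neg)
  have A: "pair_preceq Rp (l1, l2) (m1, m2) \<longleftrightarrow> (\<forall>a\<in>Rp. P a)"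
  proof -
    have "min (coroot_eval l1 a) (coroot_eval l2 a) \<le> min (coroot_eval m1 a) (coroot_eval m2 a)
       \<longleftrightarrow> P a" for a
    proof -
      have e: "coroot_eval l1 a + coroot_eval l2 a = coroot_eval m1 a + coroot_eval m2 a"
      proof -
        have "coroot_eval (l1 + l2) a = coroot_eval (m1 + m2) a" using sum by simp
        then show ?thesis by (simp only: ce_add)
      qed
      show ?thesis unfolding P_def ce_diff by (rule per_root[OF e])
    qed
    then show ?thesis unfolding pair_preceq_def by simp
  qed
  have B: "(\<forall>a\<in>Rp. P a) \<longleftrightarrow> (\<forall>a\<in>R. P a)"
  proof
    assume H: "\<forall>a\<in>Rp. P a"
    show "\<forall>a\<in>R. P a"
    proof
      fix a assume "a \<in> R"
      from split[OF this] show "P a" using H Pneg[of a] by auto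
    qed
  next
    assume "\<forall>a\<in>R. P a" then show "\<forall>a\<in>Rp. P a" using RpR by auto
  qed
  have C: "\<forall>w\<in>weyl_group R. w (l1 - l2) \<in> dominant_weights R Rp \<longrightarrow>
            ((\<forall>a\<in>R. P a) \<longleftrightarrow>
               w (l1 - m1) \<in> dominant_weights R Rp \<and> w (m1 - l2) \<in> dominant_weights R Rp)"
  proof (intro ballI impI)
    fix w assume w: "w \<in> weyl_group R" and wd: "w (l1 - l2) \<in> dominant_weights R Rp"
    have surj: "w ` R = R" by (rule weyl_surj[OF rs w])
    have wR: "\<And>g. g \<in> R \<Longrightarrow> w g \<in> R" using surj by auto
    have ce: "\<And>x g. coroot_eval (w x) (w g) = coroot_eval x g" by (rule ce_weyl[OF rs w])
    have wdom: "\<And>g. w g \<in> Rp \<Longrightarrow> coroot_eval (l1 - l2) g \<ge> 0"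
    proof -
      fix g assume "w g \<in> Rp"
      then have "coroot_eval (w (l1 - l2)) (w g) \<ge> 0" using wd unfolding dominant_weights_def by blast
      then show "coroot_eval (l1 - l2) g \<ge> 0" by (simp only: ce)
    qed
    have integ: "w (l1 - m1) \<in> integral_weights R \<and> w (m1 - l2) \<in> integral_weights R"
    proof -
      have "coroot_eval (w (l1 - m1)) b \<in> \<int> \<and> coroot_eval (w (m1 - l2)) b \<in> \<int>" if "b \<in> R" for b
      proof -
        obtain g where g: "g \<in> R" "b = w g" using surj \<open>b \<in> R\<close> by auto
        show ?thesis using g intl[OF g(1)] ce by (simp add: ce_diff)
      qed
      then show ?thesis unfolding integral_weights_def by blast
    qed
    show "(\<forall>a\<in>R. P a) \<longleftrightarrow>
               w (l1 - m1) \<in> dominant_weights R Rp \<and> w (m1 - l2) \<in> dominant_weights R Rp"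
    proof
      assume H: "\<forall>a\<in>R. P a"
      have "\<forall>b\<in>Rp. coroot_eval (w (l1 - m1)) b \<ge> 0 \<and> coroot_eval (w (m1 - l2)) b \<ge> 0"
      proof
        fix b assume b: "b \<in> Rp"
        then obtain g where g: "g \<in> R" "b = w g" using surj RpR by auto
        have p: "coroot_eval (l1 - m1) g * coroot_eval (m1 - l2) g \<ge> 0" using H g unfolding P_def by auto
        have s: "coroot_eval (l1 - m1) g + coroot_eval (m1 - l2) g \<ge> 0"
          using wdom[of g] b g by (simp add: ce_diff)
        have "coroot_eval (l1 - m1) g \<ge> 0 \<and> coroot_eval (m1 - l2) g \<ge> 0"
          using p s by (auto simp: zero_le_mult_iff)
        then show "coroot_eval (w (l1 - m1)) b \<ge> 0 \<and> coroot_eval (w (m1 - l2)) b \<ge> 0"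
          using g ce by simp
      qed
      then show "w (l1 - m1) \<in> dominant_weights R Rp \<and> w (m1 - l2) \<in> dominant_weights R Rp"
        using integ unfolding dominant_weights_def by auto
    next
      assume D: "w (l1 - m1) \<in> dominant_weights R Rp \<and> w (m1 - l2) \<in> dominant_weights R Rp"
      show "\<forall>a\<in>R. P a"
      proof
        fix g assume g: "g \<in> R"
        from split[OF wR[OF g]] show "P g"
        proof
          assume "w g \<in> Rp"
          then have "coroot_eval (w (l1 - m1)) (w g) \<ge> 0" "coroot_eval (w (m1 - l2)) (w g) \<ge> 0"
            using D unfolding dominant_weights_def by auto
          then show "P g" unfolding P_def using ce by simp
        next
          assume "- w g \<in> Rp"
          then have "coroot_eval (w (l1 - m1)) (- w g) \<ge> 0" "coroot_eval (w (m1 - l2)) (- w g) \<ge> 0"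
            using D unfolding dominant_weights_def by auto
          then have "coroot_eval (l1 - m1) g \<le> 0" "coroot_eval (m1 - l2) g \<le> 0"
            using ce by (simp_all add: ce_neg)
          then show "P g" unfolding P_def by (simp add: mult_nonpos_nonpos)
        qed
      qed
    qed
  qed
  from A B C show ?thesis unfolding P_def by (simp only:)
qed

end
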